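(* Let $p,q\ge0$ be integers and $a_1,\dots,a_p,b_1,\dots,b_q>0$, and let $$F(x)={}_pF_q(a_1,\dots,a_p;b_1,\dots,b_q;x)=1+\sum_{n=1}^\infty\frac{\prod_{k=1}^p(a_k,n)}{\prod_{k=1}^q(b_k,n)}\frac{x^n}{n!},$$ considered on $(-1,1)$ (assuming the series converges there, i.e. $p\le q+1$). Then: (1) If $p=q=0$, then $F(x)=e^x$, which is log-convex. (2) Let $p=q\ge1$. If $a_k\le b_k$ for each $k$, with at least one strict inequality, then $F$ is strictly log-convex on $(0,1)$. If $a_k\ge b_k$ for each $k$, with at least one strict inequality, then $F$ is strictly log-concave on $(0,1)$. (3) If $p>q$ and $a_k\le b_k$ for $k=1,\dots,q$, with at least one strict inequality, then $F$ is strictly log-convex on $(0,1)$. (4) If $1\le p<q$ and $a_k\ge b_k$ for $k=1,\dots,p$, with at least one strict inequality, then $F$ is strictly log-concave on $(0,1)$. (5) If $p=0$ and $q\ge1$, then $F$ is log-concave on $(0,1)$.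
   Context: $(a,0)=1$ and $(a,n)=a(a+1)\cdots(a+n-1)$ for $n\ge1$. *)

theory Defs
  imports "HOL-Analysis.Analysis"
begin

text \<open>Generalized hypergeometric series pFq with parameters a 0, ..., a (p-1)
  and b 0, ..., b (q-1) (0-based indexing of the paper's a_1..a_p, b_1..b_q).
  The n = 0 term equals 1.\<close>
definition hypgeom :: "nat \<Rightarrow> nat \<Rightarrow> (nat \<Rightarrow> real) \<Rightarrow> (nat \<Rightarrow> real) \<Rightarrow> real \<Rightarrow> real" where
  "hypgeom p q a b x =
     (\<Sum>n. (\<Prod>k<p. pochhammer (a k) n) / (\<Prod>k<q. pochhammer (b k) n) * x ^ n / fact n)"

definition strict_convex_on :: "real set \<Rightarrow> (real \<Rightarrow> real) \<Rightarrow> bool" where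
  "strict_convex_on S f \<longleftrightarrow> convex S \<and>
     (\<forall>x\<in>S. \<forall>y\<in>S. x \<noteq> y \<longrightarrow> (\<forall>t::real. 0 < t \<and> t < 1 \<longrightarrow>
        f ((1 - t) * x + t * y) < (1 - t) * f x + t * f y))"

definition strict_concave_on :: "real set \<Rightarrow> (real \<Rightarrow> real) \<Rightarrow> bool" where
  "strict_concave_on S f \<longleftrightarrow> strict_convex_on S (\<lambda>x. - f x)"

definition log_convex_on :: "real set \<Rightarrow> (real \<Rightarrow> real) \<Rightarrow> bool" where
  "log_convex_on S f \<longleftrightarrow> (\<forall>x\<in>S. f x > 0) \<and> convex_on S (\<lambda>x. ln (f x))"
definition log_concave_on :: "real set \<Rightarrow> (real \<Rightarrow> real) \<Rightarrow> bool" where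
  "log_concave_on S f \<longleftrightarrow> (\<forall>x\<in>S. f x > 0) \<and> concave_on S (\<lambda>x. ln (f x))"
definition strict_log_convex_on :: "real set \<Rightarrow> (real \<Rightarrow> real) \<Rightarrow> bool" where
  "strict_log_convex_on S f \<longleftrightarrow> (\<forall>x\<in>S. f x > 0) \<and> strict_convex_on S (\<lambda>x. ln (f x))"
definition strict_log_concave_on :: "real set \<Rightarrow> (real \<Rightarrow> real) \<Rightarrow> bool" where
  "strict_log_concave_on S f \<longleftrightarrow> (\<forall>x\<in>S. f x > 0) \<and> strict_concave_on S (\<lambda>x. ln (f x))"

end

theory Submission
  imports Defs
begin

lemma strict_convex_aux:
  fixes f f' :: "real \<Rightarrow> real"
  assumes der: "\<And>x. x \<in> {0<..<1} \<Longrightarrow> (f has_real_derivative f' x) (at x)"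
    and mono: "\<And>x y. x \<in> {0<..<1} \<Longrightarrow> y \<in> {0<..<1} \<Longrightarrow> x < y \<Longrightarrow> f' x < f' y"
    and xI: "x \<in> {0<..<1}" and yI: "y \<in> {0<..<1}" and xy: "x < y"
    and t: "0 < t" "t < 1"
  shows "f ((1 - t) * x + t * y) < (1 - t) * f x + t * f y"
proof -
  define z where "z = (1 - t) * x + t * y"
  have e1: "z - x = t * (y - x)" and e2: "y - z = (1 - t) * (y - x)" by (auto simp: z_def algebra_simps)
  have xz: "x < z" and zy: "z < y" using t xy e1 e2 by (smt (verit) mult_pos_pos)+
  have seg: "w \<in> {0<..<1}" if "x \<le> w" "w \<le> y" for w
    using xI yI that by auto
  obtain s1 where s1: "x < s1" "s1 < z" "f z - f x = (z - x) * f' s1"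
    using MVT2[OF xz, of f f'] der seg xz zy by (meson less_eq_real_def order.trans)
  obtain s2 where s2: "z < s2" "s2 < y" "f y - f z = (y - z) * f' s2"
    using MVT2[OF zy, of f f'] der seg xz zy by (meson less_eq_real_def order.trans)
  have lt: "f' s1 < f' s2" using mono[of s1 s2] seg s1 s2 by auto
  have "(1 - t) * f x + t * f y - f z = (1 - t) * t * (y - x) * (f' s2 - f' s1)"
  proof -
    have fz: "f z = f x + t*(y-x)*f' s1" proof -
      have "f z - f x = t*(y-x)*f' s1" using s1(3) e1 by simp
      thus ?thesis by linarith
    qed
    have fy: "f y = f x + t*(y-x)*f' s1 + (1-t)*(y-x)*f' s2" proof -
      have "f y - f z = (1-t)*(y-x)*f' s2" using s2(3) e2 by simp
      thus ?thesis using fz by linarith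
    qed
    show ?thesis unfolding fy fz by (simp add: algebra_simps)
  qed
  also have "\<dots> > 0" using t xy lt by simp
  finally show ?thesis unfolding z_def by simp
qed

lemma strict_convex_from_deriv:
  fixes f f' :: "real \<Rightarrow> real"
  assumes der: "\<And>x. x \<in> {0<..<1} \<Longrightarrow> (f has_real_derivative f' x) (at x)"
    and mono: "\<And>x y. x \<in> {0<..<1} \<Longrightarrow> y \<in> {0<..<1} \<Longrightarrow> x < y \<Longrightarrow> f' x < f' y"
  shows "strict_convex_on {0<..<1} f"
  unfolding strict_convex_on_def
proof (intro conjI ballI impI allI)
  show "convex {0<..<1::real}" by simp
  fix x y t :: real assume x: "x \<in> {0<..<1}" and y: "y \<in> {0<..<1}" and "x \<noteq> y" and t: "0 < t \<and> t < 1"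
  show "f ((1 - t) * x + t * y) < (1 - t) * f x + t * f y"
  proof (cases "x < y")
    case True thus ?thesis using strict_convex_aux[OF der mono x y] t by blast
  next
    case False
    hence "y < x" using \<open>x \<noteq> y\<close> by simp
    from strict_convex_aux[OF der mono y x this, of "1 - t"] t
    show ?thesis by (simp add: algebra_simps)
  qed
qed

lemma partial_identity:
  fixes u c :: "nat \<Rightarrow> real"
  shows "(\<Sum>m<N. u m * x^m) * (\<Sum>n<N. c n * y^n) - (\<Sum>m<N. u m * y^m) * (\<Sum>n<N. c n * x^n)
    = (\<Sum>n<N. \<Sum>m<n. (u m * c n - u n * c m) * (x^m * y^n - x^n * y^m))"
proof (induction N)
  case 0 then show ?case by simp
next
  case (Suc N)
  have "(\<Sum>m<N. (u m * c N - u N * c m) * (x^m * y^N - x^N * y^m))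
     = c N * y^N * (\<Sum>m<N. u m * x^m) - c N * x^N * (\<Sum>m<N. u m * y^m)
       - u N * y^N * (\<Sum>m<N. c m * x^m) + u N * x^N * (\<Sum>m<N. c m * y^m)"
    by (simp add: sum_distrib_left sum_subtractf sum.distrib algebra_simps)
  then show ?case using Suc.IH[symmetric] by (simp add: algebra_simps)
qed

lemma key_sums:
  fixes c :: "nat \<Rightarrow> real"
  assumes s1: "summable (\<lambda>n. c n * x^n)" and s2: "summable (\<lambda>n. c n * y^n)"
    and s3: "summable (\<lambda>n. diffs c n * x^n)" and s4: "summable (\<lambda>n. diffs c n * y^n)"
  shows "(\<lambda>n. \<Sum>m<n. (diffs c m * c n - diffs c n * c m) * (x^m * y^n - x^n * y^m)) sums
     ((\<Sum>n. diffs c n * x^n) * (\<Sum>n. c n * y^n) - (\<Sum>n. diffs c n * y^n) * (\<Sum>n. c n * x^n))"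
  unfolding sums_def partial_identity[symmetric]
  by (intro tendsto_intros summable_LIMSEQ s1 s2 s3 s4)

lemma pow_diff_pos:
  fixes x y :: real
  assumes "0 < x" "x < y" "m < n"
  shows "x^n * y^m < x^m * y^n"
proof -
  obtain k where n: "n = m + Suc k" using assms(3) less_iff_Suc_add by auto
  have "x^Suc k < y^Suc k" using assms by (intro power_strict_mono) auto
  moreover have "0 < x^m * y^m" using assms by simp
  ultimately have "x^m * y^m * x^Suc k < x^m * y^m * y^Suc k" by (metis mult_strict_left_mono)
  thus ?thesis unfolding n power_add by (simp add: ac_simps)
qed

locale pser =
  fixes c :: "nat \<Rightarrow> real"
  assumes cpos: "\<And>n. c n > 0"
    and summ: "\<And>z. norm z < 1 \<Longrightarrow> summable (\<lambda>n. c n * z^n)"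
begin

definition "S z = (\<Sum>n. c n * z^n)"
definition "D z = (\<Sum>n. diffs c n * z^n)"
definition "\<rho> n = diffs c n / c n"

lemma S_pos: "0 \<le> x \<Longrightarrow> x < 1 \<Longrightarrow> S x > 0"
  unfolding S_def
proof (rule suminf_pos2[where i=0])
  assume x: "0 \<le> x" "x < 1"
  show "summable (\<lambda>n. c n * x^n)" using summ x by auto
  show "0 \<le> c n * x^n" for n using cpos[of n] x by simp
  show "0 < c 0 * x^0" using cpos[of 0] by simp
qed

lemma D_summ: "norm z < 1 \<Longrightarrow> summable (\<lambda>n. diffs c n * z^n)"
  by (rule termdiff_converges[of z 1]) (use summ in auto)

lemma S_deriv: "norm z < 1 \<Longrightarrow> (S has_real_derivative D z) (at z)"
  unfolding S_def[abs_def] D_def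
  by (rule termdiffs_strong'[of 1]) (use summ in auto)

lemma lnS_deriv: "x \<in> {0<..<1} \<Longrightarrow> ((\<lambda>x. ln (S x)) has_real_derivative (D x / S x)) (at x)"
proof -
  assume x: "x \<in> {0<..<1}"
  have "S x > 0" using S_pos x by auto
  moreover have "(S has_real_derivative D x) (at x)" using S_deriv x by auto
  ultimately show ?thesis
    by (auto intro!: derivative_eq_intros simp: field_simps)
qed

lemma Q_sums:
  assumes "x \<in> {0<..<1}" "y \<in> {0<..<1}"
  shows "(\<lambda>n. \<Sum>m<n. c m * c n * (\<rho> m - \<rho> n) * (x^m * y^n - x^n * y^m)) sums (D x * S y - D y * S x)"
proof -
  have e: "diffs c m * c n - diffs c n * c m = c m * c n * (\<rho> m - \<rho> n)" for m n
    using cpos[of m] cpos[of n] by (simp add: \<rho>_def field_simps)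
  show ?thesis
    using key_sums[of c x y] summ D_summ assms unfolding S_def D_def e by auto
qed

lemma term_sign:
  fixes x y :: real
  assumes "0 < x" "x < y" "m < n"
  shows "(x^m * y^n - x^n * y^m) > 0"
  using pow_diff_pos[OF assms] by simp

lemma log_convex_strict:
  assumes mono: "\<And>m n. m \<le> n \<Longrightarrow> \<rho> m \<le> \<rho> n"
    and strict: "m0 < n0" "\<rho> m0 < \<rho> n0"
  shows "strict_log_convex_on {0<..<1} S"
  unfolding strict_log_convex_on_def
proof (intro conjI ballI)
  show "x \<in> {0<..<1} \<Longrightarrow> S x > 0" for x using S_pos by auto
  show "strict_convex_on {0<..<1} (\<lambda>x. ln (S x))"
  proof (rule strict_convex_from_deriv[OF lnS_deriv])
    fix x y :: real assume x: "x \<in> {0<..<1}" and y: "y \<in> {0<..<1}" and xy: "x < y"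
    define Q where "Q n = (\<Sum>m<n. c m * c n * (\<rho> m - \<rho> n) * (x^m * y^n - x^n * y^m))" for n
    have Qs: "Q sums (D x * S y - D y * S x)" using Q_sums[OF x y] unfolding Q_def by simp
    have tnp: "c m * c n * (\<rho> m - \<rho> n) * (x^m * y^n - x^n * y^m) \<le> 0" if "m < n" for m n
      using mono[of m n] that term_sign[of x y m n] x xy cpos[of m] cpos[of n]
      by (intro mult_nonpos_nonneg mult_nonneg_nonpos) auto
    have Qn: "- Q n \<ge> 0" for n proof -
      have "Q n \<le> 0" unfolding Q_def by (rule sum_nonpos) (use tnp in auto)
      thus ?thesis by simp
    qed
    have "- Q n0 > 0"
    proof -
      have "0 < (\<Sum>m<n0. - (c m * c n0 * (\<rho> m - \<rho> n0) * (x^m * y^n0 - x^n0 * y^m)))"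
      proof (rule sum_pos2[where i=m0])
        show "m0 \<in> {..<n0}" using strict by simp
        show "0 < - (c m0 * c n0 * (\<rho> m0 - \<rho> n0) * (x^m0 * y^n0 - x^n0 * y^m0))"
          using strict term_sign[of x y m0 n0] x xy cpos[of m0] cpos[of n0]
          by (simp add: mult_pos_neg mult_neg_pos)
        show "\<And>i. i \<in> {..<n0} \<Longrightarrow> 0 \<le> - (c i * c n0 * (\<rho> i - \<rho> n0) * (x^i * y^n0 - x^n0 * y^i))"
          using tnp by simp
      qed simp
      thus ?thesis unfolding Q_def by (simp add: sum_negf)
    qed
    hence "0 < suminf (\<lambda>n. - Q n)"
      using suminf_pos2[of "\<lambda>n. - Q n" n0] Qn Qs summable_minus sums_summable by blast
    hence "D x * S y - D y * S x < 0" using Qs sums_unique suminf_minus sums_summable by (metis neg_0_less_iff_less)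
    moreover have "S x > 0" "S y > 0" using S_pos x y by auto
    ultimately show "D x / S x < D y / S y" by (simp add: field_simps)
  qed
qed

lemma concave_key:
  assumes anti: "\<And>m n. m \<le> n \<Longrightarrow> \<rho> n \<le> \<rho> m"
    and x: "x \<in> {0<..<1}" and y: "y \<in> {0<..<1}" and xy: "x < y"
  shows "D y / S y \<le> D x / S x"
    and "m0 < n0 \<Longrightarrow> \<rho> n0 < \<rho> m0 \<Longrightarrow> D y / S y < D x / S x"
proof -
  define Q where "Q n = (\<Sum>m<n. c m * c n * (\<rho> m - \<rho> n) * (x^m * y^n - x^n * y^m))" for n
  have Qs: "Q sums (D x * S y - D y * S x)" using Q_sums[OF x y] unfolding Q_def by simp
  have tnp: "c m * c n * (\<rho> m - \<rho> n) * (x^m * y^n - x^n * y^m) \<ge> 0" if "m < n" for m n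
    using anti[of m n] that term_sign[of x y m n] x xy cpos[of m] cpos[of n]
    by (intro mult_nonneg_nonneg) auto
  have Qn: "Q n \<ge> 0" for n unfolding Q_def by (rule sum_nonneg) (use tnp in auto)
  have Spos: "S x > 0" "S y > 0" using S_pos x y by auto
  have "0 \<le> suminf Q" using Qn Qs sums_summable suminf_nonneg by blast
  hence "0 \<le> D x * S y - D y * S x" using Qs sums_unique by metis
  thus "D y / S y \<le> D x / S x" using Spos by (simp add: field_simps)
  assume strict: "m0 < n0" "\<rho> n0 < \<rho> m0"
  have "Q n0 > 0" unfolding Q_def
  proof (rule sum_pos2[where i=m0])
    show "m0 \<in> {..<n0}" using strict by simp
    show "0 < (c m0 * c n0 * (\<rho> m0 - \<rho> n0) * (x^m0 * y^n0 - x^n0 * y^m0))"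
      using strict term_sign[of x y m0 n0] x xy cpos[of m0] cpos[of n0] by simp
    show "\<And>i. i \<in> {..<n0} \<Longrightarrow> 0 \<le> (c i * c n0 * (\<rho> i - \<rho> n0) * (x^i * y^n0 - x^n0 * y^i))"
      using tnp by simp
  qed simp
  hence "0 < suminf Q" using suminf_pos2[of Q n0] Qn Qs sums_summable by blast
  hence "0 < D x * S y - D y * S x" using Qs sums_unique by metis
  thus "D y / S y < D x / S x" using Spos by (simp add: field_simps)
qed

lemma nlnS_deriv: "x \<in> {0<..<1} \<Longrightarrow> ((\<lambda>x. - ln (S x)) has_real_derivative (- (D x / S x))) (at x)"
  using lnS_deriv by (intro derivative_intros)

lemma log_concave_strict:
  assumes anti: "\<And>m n. m \<le> n \<Longrightarrow> \<rho> n \<le> \<rho> m"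
    and strict: "m0 < n0" "\<rho> n0 < \<rho> m0"
  shows "strict_log_concave_on {0<..<1} S"
  unfolding strict_log_concave_on_def strict_concave_on_def
proof (intro conjI ballI)
  show "x \<in> {0<..<1} \<Longrightarrow> S x > 0" for x using S_pos by auto
  show "strict_convex_on {0<..<1} (\<lambda>x. - ln (S x))"
    by (rule strict_convex_from_deriv[OF nlnS_deriv]) (use concave_key(2)[OF anti _ _ _ strict] in auto)
qed

lemma log_concave:
  assumes anti: "\<And>m n. m \<le> n \<Longrightarrow> \<rho> n \<le> \<rho> m"
  shows "log_concave_on {0<..<1} S"
  unfolding log_concave_on_def concave_on_def
proof (intro conjI ballI)
  show "x \<in> {0<..<1} \<Longrightarrow> S x > 0" for x using S_pos by auto
  show "convex_on {0<..<1} (\<lambda>x. - ln (S x))"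
  proof (rule convex_on_realI[OF _ nlnS_deriv])
    fix x y :: real assume "x \<in> {0<..<1}" "y \<in> {0<..<1}" "x \<le> y"
    thus "- (D x / S x) \<le> - (D y / S y)"
      using concave_key(1)[OF anti, of x y] by (cases "x = y") auto
  qed auto
qed

end


lemma frac_mono:
  fixes a b :: real and m n :: nat
  assumes "0 < a" "a \<le> b" "m \<le> n"
  shows "(a + m)/(b + m) \<le> (a + n)/(b + n)"
proof -
  have "(b - a) * (real n - real m) \<ge> 0" using assms by simp
  hence "(a + m) * (b + n) \<le> (a + n) * (b + m)" by (simp add: algebra_simps)
  thus ?thesis using assms by (simp add: divide_simps add_pos_nonneg)
qed

lemma frac_mono_strict:
  fixes a b :: real and m n :: nat
  assumes "0 < a" "a < b" "m < n"
  shows "(a + m)/(b + m) < (a + n)/(b + n)"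
proof -
  have "(b - a) * (real n - real m) > 0" using assms by simp
  hence "(a + m) * (b + n) < (a + n) * (b + m)" by (simp add: algebra_simps)
  thus ?thesis using assms by (simp add: divide_simps add_pos_nonneg)
qed

lemma frac_anti:
  fixes a b :: real and m n :: nat
  assumes "0 < b" "b \<le> a" "m \<le> n"
  shows "(a + n)/(b + n) \<le> (a + m)/(b + m)"
proof -
  have "(a - b) * (real n - real m) \<ge> 0" using assms by simp
  hence "(a + n) * (b + m) \<le> (a + m) * (b + n)" by (simp add: algebra_simps)
  thus ?thesis using assms by (simp add: divide_simps add_pos_nonneg)
qed

lemma frac_anti_strict:
  fixes a b :: real and m n :: nat
  assumes "0 < b" "b < a" "m < n"
  shows "(a + n)/(b + n) < (a + m)/(b + m)"
proof -
  have "(a - b) * (real n - real m) > 0" using assms by simp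
  hence "(a + n) * (b + m) < (a + m) * (b + n)" by (simp add: algebra_simps)
  thus ?thesis using assms by (simp add: divide_simps add_pos_nonneg)
qed

lemma prod_le_pos:
  fixes f g :: "nat \<Rightarrow> real"
  assumes "\<And>k. k \<in> I \<Longrightarrow> 0 < f k" "\<And>k. k \<in> I \<Longrightarrow> f k \<le> g k"
  shows "prod f I \<le> prod g I"
  using assms by (intro prod_mono) (auto intro: less_imp_le)

lemma prod_less_pos:
  fixes f g :: "nat \<Rightarrow> real"
  assumes "finite I" "\<And>k. k \<in> I \<Longrightarrow> 0 < f k" "\<And>k. k \<in> I \<Longrightarrow> f k \<le> g k"
    and "k0 \<in> I" "f k0 < g k0"
  shows "prod f I < prod g I"
proof -
  have "prod f I = f k0 * prod f (I - {k0})" using assms by (simp add: prod.remove)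
  moreover have "prod g I = g k0 * prod g (I - {k0})" using assms by (simp add: prod.remove)
  moreover have "prod f (I - {k0}) \<le> prod g (I - {k0})" using assms by (intro prod_le_pos) auto
  moreover have "0 < prod f (I - {k0})" using assms by (intro prod_pos) auto
  moreover have "0 < f k0" using assms by auto
  ultimately show ?thesis using assms(5) by (simp add: mult_less_le_imp_less)
qed

locale hg =
  fixes p q :: nat and a b :: "nat \<Rightarrow> real"
  assumes apos: "\<And>k. k < p \<Longrightarrow> a k > 0"
    and bpos: "\<And>k. k < q \<Longrightarrow> b k > 0"
    and conv: "p \<le> q + 1"
begin

definition "cc n = (\<Prod>k<p. pochhammer (a k) n) / (\<Prod>k<q. pochhammer (b k) n) / fact n"

lemma PA_pos: "(\<Prod>k<p. pochhammer (a k) n) > 0"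
  using apos by (intro prod_pos pochhammer_pos) auto
lemma PB_pos: "(\<Prod>k<q. pochhammer (b k) n) > 0"
  using bpos by (intro prod_pos pochhammer_pos) auto

lemma cc_pos: "cc n > 0"
  unfolding cc_def using PA_pos PB_pos by simp

definition "rr n = (\<Prod>k<p. (a k + real n)) / (\<Prod>k<q. (b k + real n))"

lemma RA_pos: "(\<Prod>k<p. (a k + real n)) > 0"
  using apos by (intro prod_pos) (auto intro: add_pos_nonneg)
lemma RB_pos: "(\<Prod>k<q. (b k + real n)) > 0"
  using bpos by (intro prod_pos) (auto intro: add_pos_nonneg)

lemma cc_Suc: "cc (Suc n) = rr n * cc n / real (Suc n)"
proof -
  have "(\<Prod>k<p. pochhammer (a k) (Suc n)) = (\<Prod>k<p. (a k + real n)) * (\<Prod>k<p. pochhammer (a k) n)"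
    by (simp add: pochhammer_rec' prod.distrib)
  moreover have "(\<Prod>k<q. pochhammer (b k) (Suc n)) = (\<Prod>k<q. (b k + real n)) * (\<Prod>k<q. pochhammer (b k) n)"
    by (simp add: pochhammer_rec' prod.distrib)
  ultimately show ?thesis
    unfolding cc_def rr_def using PA_pos[of n] PB_pos[of n] RA_pos[of n] RB_pos[of n]
    by (simp add: field_simps)
qed

lemma rho_eq: "diffs cc n / cc n = rr n"
proof -
  have "diffs cc n = rr n * cc n" unfolding diffs_def cc_Suc by (simp del: of_nat_Suc)
  thus ?thesis using cc_pos[of n] by simp
qed


definition "AA = 1 + (\<Sum>k<p. a k)"

lemma AA_ge: "k < p \<Longrightarrow> a k \<le> AA"
proof -
  assume k: "k < p"
  have "a k \<le> (\<Sum>k<p. a k)" using k apos by (intro member_le_sum) (auto intro: less_imp_le)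
  thus ?thesis unfolding AA_def by simp
qed

lemma AA_pos: "AA \<ge> 1"
proof -
  have "0 \<le> sum a {..<p}" by (intro sum_nonneg) (simp add: apos less_imp_le)
  thus ?thesis unfolding AA_def by simp
qed

lemma rr_bound:
  assumes n: "n \<ge> 1"
  shows "rr n / real (Suc n) \<le> ((AA + real n) / real n) ^ Suc q"
proof -
  have "(\<Prod>k<p. (a k + real n)) \<le> (\<Prod>k<p. (AA + real n))"
    by (intro prod_mono) (smt (verit) apos AA_ge lessThan_iff of_nat_0_le_iff)
  also have "\<dots> = (AA + real n) ^ p" by simp
  also have "\<dots> \<le> (AA + real n) ^ Suc q" using AA_pos conv by (intro power_increasing) auto
  finally have num: "(\<Prod>k<p. (a k + real n)) \<le> (AA + real n) ^ Suc q" .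
  have "real n ^ q = (\<Prod>k<q. real n)" by simp
  also have "\<dots> \<le> (\<Prod>k<q. (b k + real n))"
    using bpos by (intro prod_mono) (auto intro: less_imp_le)
  finally have den: "real n ^ q \<le> (\<Prod>k<q. (b k + real n))" .
  have np: "real n > 0" using n by simp
  have "real n ^ Suc q \<le> (\<Prod>k<q. (b k + real n)) * real (Suc n)"
    using den np by (simp add: mult_mono' mult.commute)
  have "rr n / real (Suc n) = (\<Prod>k<p. (a k + real n)) / ((\<Prod>k<q. (b k + real n)) * real (Suc n))"
    unfolding rr_def by simp
  also have "\<dots> \<le> (AA + real n) ^ Suc q / real n ^ Suc q"
  proof (rule frac_le)
    show "0 \<le> (AA + real n) ^ Suc q" using AA_pos by simp
    show "(\<Prod>k<p. (a k + real n)) \<le> (AA + real n) ^ Suc q" by (rule num)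
    show "0 < real n ^ Suc q" using np by simp
    show "real n ^ Suc q \<le> (\<Prod>k<q. (b k + real n)) * real (Suc n)"
      using den np by (simp add: mult_mono' mult.commute)
  qed
  also have "\<dots> = ((AA + real n) / real n) ^ Suc q" by (simp add: power_divide)
  finally show ?thesis .
qed

lemma lim_bound: "(\<lambda>n. ((AA + real n) / real n) ^ Suc q) \<longlonglongrightarrow> 1"
proof -
  have "(\<lambda>n. 1 + AA / real n) \<longlonglongrightarrow> 1 + 0"
    by (intro tendsto_add tendsto_const lim_const_over_n)
  moreover have "\<forall>\<^sub>F n in sequentially. 1 + AA / real n = (AA + real n) / real n"
      using eventually_gt_at_top[of 0] by eventually_elim (simp add: field_simps)
  ultimately have "(\<lambda>n. (AA + real n) / real n) \<longlonglongrightarrow> 1"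
    using tendsto_cong by force
  from tendsto_power[OF this, of "Suc q"] show ?thesis by simp
qed

lemma cc_summ:
  assumes z: "norm z < 1"
  shows "summable (\<lambda>n. cc n * z^n)"
proof -
  define \<theta> where "\<theta> = (1 + norm z) / 2"
  have th: "norm z < \<theta>" "\<theta> < 1" using z by (auto simp: \<theta>_def)
  have "(\<lambda>n. ((AA + real n) / real n) ^ Suc q * norm z) \<longlonglongrightarrow> 1 * norm z"
    by (intro tendsto_mult lim_bound tendsto_const)
  hence "eventually (\<lambda>n. ((AA + real n) / real n) ^ Suc q * norm z < \<theta>) sequentially"
    using th by (intro order_tendstoD) auto
  then obtain N where N: "\<And>n. n \<ge> N \<Longrightarrow> ((AA + real n) / real n) ^ Suc q * norm z < \<theta>"
    by (auto simp: eventually_sequentially)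
  show ?thesis
  proof (rule summable_ratio_test[where N="max N 1"])
    show "\<theta> < 1" by (rule th)
    fix n assume n: "n \<ge> max N 1"
    have b1: "rr n / real (Suc n) * norm z \<le> \<theta>"
      using rr_bound[of n] N[of n] n by (smt (verit) max.bounded_iff mult_right_mono norm_ge_zero)
    have "norm (cc (Suc n) * z ^ Suc n) = (rr n / real (Suc n) * norm z) * (cc n * norm z ^ n)"
      using cc_pos[of n] cc_pos[of "Suc n"] RA_pos[of n] RB_pos[of n] unfolding cc_Suc rr_def
      by (simp add: norm_mult norm_power abs_mult power_abs field_simps)
    also have "\<dots> \<le> \<theta> * (cc n * norm z ^ n)"
      using b1 cc_pos[of n] by (intro mult_right_mono) auto
    also have "\<dots> = \<theta> * norm (cc n * z ^ n)" using cc_pos[of n] by (simp add: abs_mult power_abs)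
    finally show "norm (cc (Suc n) * z ^ Suc n) \<le> \<theta> * norm (cc n * z ^ n)" .
  qed
qed

sublocale pser cc
  using cc_pos cc_summ by unfold_locales auto

lemma F_eq: "hypgeom p q a b = S"
  unfolding hypgeom_def S_def[abs_def] cc_def by (simp add: field_simps)

lemma rho_rr: "\<rho> n = rr n" unfolding \<rho>_def using rho_eq by simp


definition "psi k n = (if k < p then a k + real n else 1) / (b k + real n)"

lemma rr_le_q: "p \<le> q \<Longrightarrow> rr n = (\<Prod>k<q. psi k n)"
proof -
  assume pq: "p \<le> q"
  have st: "{..<q} \<inter> {k. k < p} = {..<p}" using pq by auto
  have "(\<Prod>k<q. (if k < p then a k + real n else 1)) = (\<Prod>k<p. a k + real n)"
    by (simp add: prod.If_cases st)
  thus ?thesis unfolding rr_def psi_def prod_dividef by simp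
qed

lemma psi_pos: "k < q \<Longrightarrow> psi k n > 0"
  unfolding psi_def using apos bpos by (auto intro!: divide_pos_pos add_pos_nonneg)

lemma rr_anti:
  assumes pq: "p \<le> q" and ab: "\<forall>k<p. b k \<le> a k" and mn: "m \<le> n"
  shows "rr n \<le> rr m"
  unfolding rr_le_q[OF pq]
proof (rule prod_le_pos)
  fix k assume k: "k \<in> {..<q}"
  show "0 < psi k n" using psi_pos k by simp
  show "psi k n \<le> psi k m"
  proof (cases "k < p")
    case True thus ?thesis unfolding psi_def using frac_anti[of "b k" "a k" m n] ab bpos k mn by auto
  next
    case False thus ?thesis unfolding psi_def using bpos[of k] k mn
      by (auto simp: divide_simps add_pos_nonneg)
  qed
qed

lemma rr_anti_strict:
  assumes pq: "p \<le> q" and ab: "\<forall>k<p. b k \<le> a k" and k0: "k0 < p" "b k0 < a k0"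
  shows "rr 1 < rr 0"
  unfolding rr_le_q[OF pq]
proof (rule prod_less_pos[of "{..<q}" _ _ k0])
  show "k0 \<in> {..<q}" using k0 pq by simp
  show "psi k0 1 < psi k0 0" unfolding psi_def using frac_anti_strict[of "b k0" "a k0" 0 1] k0 bpos[of k0] pq by auto
  fix k assume k: "k \<in> {..<q}"
  show "0 < psi k 1" using psi_pos k by simp
  show "psi k 1 \<le> psi k 0"
  proof (cases "k < p")
    case True thus ?thesis unfolding psi_def using frac_anti[of "b k" "a k" 0 1] ab bpos k by auto
  next
    case False thus ?thesis unfolding psi_def using bpos[of k] k
      by (auto simp: divide_simps add_pos_nonneg)
  qed
qed simp

lemma rr_mono_eq:
  assumes pq: "p = q" and ab: "\<forall>k<p. a k \<le> b k" and mn: "m \<le> n"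
  shows "rr m \<le> rr n"
  unfolding rr_le_q[OF eq_imp_le[OF pq]]
proof (rule prod_le_pos)
  fix k assume k: "k \<in> {..<q}"
  show "0 < psi k m" using psi_pos k by simp
  show "psi k m \<le> psi k n"
    unfolding psi_def using frac_mono[of "a k" "b k" m n] ab apos k mn pq by auto
qed

lemma rr_mono_eq_strict:
  assumes pq: "p = q" and ab: "\<forall>k<p. a k \<le> b k" and k0: "k0 < p" "a k0 < b k0"
  shows "rr 0 < rr 1"
  unfolding rr_le_q[OF eq_imp_le[OF pq]]
proof (rule prod_less_pos[of "{..<q}" _ _ k0])
  show "k0 \<in> {..<q}" using k0 pq by simp
  show "psi k0 0 < psi k0 1" unfolding psi_def using frac_mono_strict[of "a k0" "b k0" 0 1] k0 apos[of k0] pq by auto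
  fix k assume k: "k \<in> {..<q}"
  show "0 < psi k 0" using psi_pos k by simp
  show "psi k 0 \<le> psi k 1"
    unfolding psi_def using frac_mono[of "a k" "b k" 0 1] ab apos k pq by auto
qed simp

lemma rr_Suc_q: "p = Suc q \<Longrightarrow> rr n = (a q + real n) * (\<Prod>k<q. (a k + real n) / (b k + real n))"
  unfolding rr_def by (simp add: prod_dividef)

lemma rr_mono_suc:
  assumes pq: "p = Suc q" and ab: "\<forall>k<q. a k \<le> b k" and mn: "m \<le> n"
  shows "rr m \<le> rr n"
proof -
  have P: "(\<Prod>k<q. (a k + real m) / (b k + real m)) \<le> (\<Prod>k<q. (a k + real n) / (b k + real n))"
    using frac_mono ab apos bpos mn pq
    by (intro prod_le_pos) (auto intro!: divide_pos_pos add_pos_nonneg)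
  have P0: "0 < (\<Prod>k<q. (a k + real m) / (b k + real m))"
    using apos bpos pq by (intro prod_pos) (auto intro!: divide_pos_pos add_pos_nonneg)
  have "a q + real m \<le> a q + real n" using mn by simp
  moreover have "0 < a q + real m" using apos[of q] pq by simp
  ultimately show ?thesis unfolding rr_Suc_q[OF pq] using P P0 by (intro mult_mono) auto
qed

lemma rr_mono_suc_strict:
  assumes pq: "p = Suc q" and ab: "\<forall>k<q. a k \<le> b k"
  shows "rr 0 < rr 1"
proof -
  have P: "(\<Prod>k<q. (a k + real 0) / (b k + real 0)) \<le> (\<Prod>k<q. (a k + real 1) / (b k + real 1))"
  proof (rule prod_le_pos)
    fix k assume k: "k \<in> {..<q}"
    show "0 < (a k + real 0) / (b k + real 0)" using apos[of k] bpos[of k] k pq by simp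
    show "(a k + real 0) / (b k + real 0) \<le> (a k + real 1) / (b k + real 1)"
      using frac_mono[of "a k" "b k" 0 1] apos[of k] ab k pq by simp
  qed
  have P0: "0 < (\<Prod>k<q. (a k + real 0) / (b k + real 0))"
    using apos bpos pq by (intro prod_pos) (auto intro!: divide_pos_pos add_pos_nonneg)
  have "a q + real 0 < a q + real 1" by simp
  moreover have "0 < a q + real 0" using apos[of q] pq by simp
  ultimately show ?thesis unfolding rr_Suc_q[OF pq] using P P0 by (intro mult_less_le_imp_less) auto
qed

end

theorem theorem3p15:
  fixes p q :: nat and a b :: "nat \<Rightarrow> real"
  assumes apos: "\<And>k. k < p \<Longrightarrow> a k > 0"
    and bpos: "\<And>k. k < q \<Longrightarrow> b k > 0"
    and conv: "p \<le> q + 1"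
  defines "F \<equiv> hypgeom p q a b"
  shows
    "(p = 0 \<and> q = 0 \<longrightarrow>
        (\<forall>x\<in>{-1<..<1}. F x = exp x) \<and> log_convex_on {-1<..<1} F)
     \<and> (p = q \<and> 1 \<le> p \<and> (\<forall>k<p. a k \<le> b k) \<and> (\<exists>k<p. a k < b k) \<longrightarrow>
          strict_log_convex_on {0<..<1} F)
     \<and> (p = q \<and> 1 \<le> p \<and> (\<forall>k<p. a k \<ge> b k) \<and> (\<exists>k<p. a k > b k) \<longrightarrow>
          strict_log_concave_on {0<..<1} F)
     \<and> (p > q \<and> (\<forall>k<q. a k \<le> b k) \<and> (\<exists>k<q. a k < b k) \<longrightarrow>
          strict_log_convex_on {0<..<1} F)
     \<and> (1 \<le> p \<and> p < q \<and> (\<forall>k<p. a k \<ge> b k) \<and> (\<exists>k<p. a k > b k) \<longrightarrow>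
          strict_log_concave_on {0<..<1} F)
     \<and> (p = 0 \<and> 1 \<le> q \<longrightarrow> log_concave_on {0<..<1} F)"
proof -
  interpret hg p q a b using apos bpos conv by unfold_locales
  have FS: "F = S" unfolding F_def F_eq ..
  have rho: "\<rho> = rr" using rho_rr by auto
  show ?thesis
  proof (intro conjI impI)
    assume pq: "p = 0 \<and> q = 0"
    have Fe: "F = exp" unfolding F_def hypgeom_def exp_def using pq
      by (auto simp: scaleR_conv_of_real divide_inverse mult.commute)
    show "\<forall>x\<in>{-1<..<1}. F x = exp x" using Fe by simp
    have "(\<lambda>x. ln (F x)) = (\<lambda>x. x)" using Fe by auto
    thus "log_convex_on {-1<..<1} F" unfolding log_convex_on_def using Fe
      by (simp add: convex_on_ident)
  next
    assume h: "p = q \<and> 1 \<le> p \<and> (\<forall>k<p. a k \<le> b k) \<and> (\<exists>k<p. a k < b k)"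
    then obtain k0 where "k0 < p" "a k0 < b k0" by auto
    show "strict_log_convex_on {0<..<1} F" unfolding FS
    proof (rule log_convex_strict[of 0 1])
      show "\<And>m n. m \<le> n \<Longrightarrow> \<rho> m \<le> \<rho> n" unfolding rho using rr_mono_eq h by blast
      show "\<rho> 0 < \<rho> 1" unfolding rho using rr_mono_eq_strict h \<open>k0 < p\<close> \<open>a k0 < b k0\<close> by blast
    qed simp
  next
    assume h: "p = q \<and> 1 \<le> p \<and> (\<forall>k<p. b k \<le> a k) \<and> (\<exists>k<p. b k < a k)"
    then obtain k0 where "k0 < p" "b k0 < a k0" by auto
    show "strict_log_concave_on {0<..<1} F" unfolding FS
    proof (rule log_concave_strict[of 0 1])
      show "\<And>m n. m \<le> n \<Longrightarrow> \<rho> n \<le> \<rho> m" unfolding rho using rr_anti h by simp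
      show "\<rho> 1 < \<rho> 0" unfolding rho using rr_anti_strict h \<open>k0 < p\<close> \<open>b k0 < a k0\<close> by simp
    qed simp
  next
    assume h: "q < p \<and> (\<forall>k<q. a k \<le> b k) \<and> (\<exists>k<q. a k < b k)"
    hence pq: "p = Suc q" using conv by simp
    show "strict_log_convex_on {0<..<1} F" unfolding FS
    proof (rule log_convex_strict[of 0 1])
      show "\<And>m n. m \<le> n \<Longrightarrow> \<rho> m \<le> \<rho> n" unfolding rho using rr_mono_suc h pq by blast
      show "\<rho> 0 < \<rho> 1" unfolding rho using rr_mono_suc_strict h pq by blast
    qed simp
  next
    assume h: "1 \<le> p \<and> p < q \<and> (\<forall>k<p. b k \<le> a k) \<and> (\<exists>k<p. b k < a k)"
    then obtain k0 where "k0 < p" "b k0 < a k0" by auto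
    show "strict_log_concave_on {0<..<1} F" unfolding FS
    proof (rule log_concave_strict[of 0 1])
      show "\<And>m n. m \<le> n \<Longrightarrow> \<rho> n \<le> \<rho> m" unfolding rho using rr_anti h by simp
      show "\<rho> 1 < \<rho> 0" unfolding rho using rr_anti_strict h \<open>k0 < p\<close> \<open>b k0 < a k0\<close> by simp
    qed simp
  next
    assume h: "p = 0 \<and> 1 \<le> q"
    show "log_concave_on {0<..<1} F" unfolding FS
    proof (rule log_concave)
      show "\<And>m n. m \<le> n \<Longrightarrow> \<rho> n \<le> \<rho> m" unfolding rho using rr_anti[of m n for m n] h by simp
    qed
  qed
qed

end
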